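(* Let $G=(V,E)$ be a finite, simple, connected graph with $|V|\geq 3$, let $\mathcal{T}\subset V$ be a twin class of $G$ (of any size), and let $d\in\mathrm{Der}(\mathcal{A}(G))$ with $d(e_i)=\sum_{k\in V}d_{ik}e_k$. Then: (i) $d_{ik}=d_{ki}=0$ for all $i\in\mathcal{T}$ and $k\in V\setminus\mathcal{T}$; (ii) $d_{ii}=0$ for all $i\in\mathcal{T}$; (iii) $d_{\ell\ell}=0$ for all $\ell\in\mathcal{N}(\mathcal{T})$; (iv) $d_{ij}=-d_{ji}$ for all $i,j\in\mathcal{T}$ with $i\neq j$.
   Context: Throughout, $\mathbb{K}$ is a field of characteristic $0$. A graph $G=(V,E)$ has vertex set $V=\{1,\dots,n\}$ and is assumed finite, simple (no loops, no multiple edges) and connected. $\mathcal{N}(i)$ denotes the set of neighbors of vertex $i$, and for $U\subset V$, $\mathcal{N}(U)=\{j\in V: j\in\mathcal{N}(i)\text{ for some } i\in U\}$. $(a_{ij})$ is the adjacency matrix ($a_{ij}=1$ if $i,j$ are adjacent, $0$ otherwise). The evolution algebra $\mathcal{A}(G)$ is the $\mathbb{K}$-algebra with basis $\{e_i: i\in V\}$ and product $e_i\cdot e_i=\sum_{k\in V}a_{ik}e_k=\sum_{k\in\mathcal{N}(i)}e_k$ and $e_i\cdot e_j=0$ for $i\neq j$. A derivation of $\mathcal{A}(G)$ is a linear map $d:\mathcal{A}(G)\to\mathcal{A}(G)$ with $d(u\cdot v)=d(u)\cdot v+u\cdot d(v)$ for all $u,v$; $\mathrm{Der}(\mathcal{A}(G))$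 is the space of derivations, and for $d$ in it we write $d(e_i)=\sum_{k\in V}d_{ik}e_k$. Two vertices $i,j$ are twins if $\mathcal{N}(i)=\mathcal{N}(j)$; this is an equivalence relation whose classes are called twin classes. *)

theory Defs
  imports Main
begin

definition simple_graph :: "'v set \<Rightarrow> ('v \<Rightarrow> 'v \<Rightarrow> bool) \<Rightarrow> bool" where
  "simple_graph V E \<longleftrightarrow> finite V \<and> (\<forall>i j. E i j \<longrightarrow> i \<in> V \<and> j \<in> V)
     \<and> (\<forall>i j. E i j \<longrightarrow> E j i) \<and> (\<forall>i. \<not> E i i)"

definition connected_graph :: "'v set \<Rightarrow> ('v \<Rightarrow> 'v \<Rightarrow> bool) \<Rightarrow> bool" where
  "connected_graph V E \<longleftrightarrow> (\<forall>i\<in>V. \<forall>j\<in>V. E\<^sup>*\<^sup>* i j)"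

definition nbhd :: "('v \<Rightarrow> 'v \<Rightarrow> bool) \<Rightarrow> 'v \<Rightarrow> 'v set" where
  "nbhd E i = {j. E i j}"

definition nbhd_set :: "('v \<Rightarrow> 'v \<Rightarrow> bool) \<Rightarrow> 'v set \<Rightarrow> 'v set" where
  "nbhd_set E U = {j. \<exists>i\<in>U. j \<in> nbhd E i}"

definition twin_class :: "'v set \<Rightarrow> ('v \<Rightarrow> 'v \<Rightarrow> bool) \<Rightarrow> 'v set \<Rightarrow> bool" where
  "twin_class V E T \<longleftrightarrow> (\<exists>i\<in>V. T = {j\<in>V. nbhd E j = nbhd E i})"

text \<open>The evolution algebra A(G): elements are coordinate vectors u : V \<rightarrow> K
  (functions vanishing outside V); basis vectors e_i.\<close>
definition evo_space :: "'v set \<Rightarrow> ('v \<Rightarrow> 'k::field_char_0) set" where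
  "evo_space V = {u. \<forall>k. k \<notin> V \<longrightarrow> u k = 0}"

definition basis_vec :: "'v \<Rightarrow> 'v \<Rightarrow> 'k::field_char_0" where
  "basis_vec i = (\<lambda>k. if k = i then 1 else 0)"

text \<open>Product: bilinear extension of e_i e_i = sum over k of a_ik e_k, e_i e_j = 0 (i \<noteq> j).\<close>
definition evo_mult :: "'v set \<Rightarrow> ('v \<Rightarrow> 'v \<Rightarrow> bool) \<Rightarrow> ('v \<Rightarrow> 'k::field_char_0) \<Rightarrow> ('v \<Rightarrow> 'k) \<Rightarrow> ('v \<Rightarrow> 'k)" where
  "evo_mult V E u v = (\<lambda>k. if k \<in> V then (\<Sum>i\<in>V. u i * v i * (if E i k then 1 else 0)) else 0)"

definition is_derivation :: "'v set \<Rightarrow> ('v \<Rightarrow> 'v \<Rightarrow> bool) \<Rightarrow> (('v \<Rightarrow> 'k::field_char_0) \<Rightarrow> ('v \<Rightarrow> 'k)) \<Rightarrow> bool" where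
  "is_derivation V E d \<longleftrightarrow>
     (\<forall>u\<in>evo_space V. d u \<in> evo_space V)
   \<and> (\<forall>u\<in>evo_space V. \<forall>v\<in>evo_space V. d (\<lambda>k. u k + v k) = (\<lambda>k. d u k + d v k))
   \<and> (\<forall>c. \<forall>u\<in>evo_space V. d (\<lambda>k. c * u k) = (\<lambda>k. c * d u k))
   \<and> (\<forall>u\<in>evo_space V. \<forall>v\<in>evo_space V.
        d (evo_mult V E u v) = (\<lambda>k. evo_mult V E (d u) v k + evo_mult V E u (d v) k))"

definition der_coeff :: "(('v \<Rightarrow> 'k::field_char_0) \<Rightarrow> ('v \<Rightarrow> 'k)) \<Rightarrow> 'v \<Rightarrow> 'v \<Rightarrow> 'k" where
  "der_coeff d i k = d (basis_vec i) k"

end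

theory Submission
  imports Defs
begin

lemma der_zero:
  fixes d :: "('v \<Rightarrow> 'k::field_char_0) \<Rightarrow> ('v \<Rightarrow> 'k)"
  assumes "is_derivation V E d"
  shows "d (\<lambda>k. 0) = (\<lambda>k. 0)"
proof -
  have u: "(\<lambda>k. 0::'k) \<in> evo_space V" by (simp add: evo_space_def)
  have h: "\<forall>c. \<forall>u\<in>evo_space V. d (\<lambda>k. c * u k) = (\<lambda>k. c * d u k)"
    using assms unfolding is_derivation_def by (elim conjE)
  show ?thesis using bspec[OF spec[OF h, of 0] u] by simp
qed

lemma der_sum:
  assumes der: "is_derivation V E d" and fin: "finite S" and sub: "S \<subseteq> V"
  shows "d (\<lambda>k. \<Sum>l\<in>S. c l * basis_vec l k) = (\<lambda>k. \<Sum>l\<in>S. c l * d (basis_vec l) k)"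
  using fin sub
proof (induction S rule: finite_induct)
  case empty
  then show ?case using der_zero[OF der] by simp
next
  case (insert a F)
  have aV: "a \<in> V" using insert by auto
  have FV: "F \<subseteq> V" using insert by auto
  have e1: "(\<lambda>k. c a * basis_vec a k) \<in> evo_space V"
    using aV by (auto simp: evo_space_def basis_vec_def)
  have e2: "(\<lambda>k. \<Sum>l\<in>F. c l * basis_vec l k) \<in> evo_space V"
    using FV by (auto simp: evo_space_def basis_vec_def intro!: sum.neutral)
  have ea: "basis_vec a \<in> evo_space V"
    using aV by (auto simp: evo_space_def basis_vec_def)
  have sc: "\<forall>c. \<forall>u\<in>evo_space V. d (\<lambda>k. c * u k) = (\<lambda>k. c * d u k)"
    using der unfolding is_derivation_def by (elim conjE)
  have add: "\<forall>u\<in>evo_space V. \<forall>v\<in>evo_space V. d (\<lambda>k. u k + v k) = (\<lambda>k. d u k + d v k)"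
    using der unfolding is_derivation_def by (elim conjE)
  have "(\<lambda>k. \<Sum>l\<in>insert a F. c l * basis_vec l k)
      = (\<lambda>k. c a * basis_vec a k + (\<Sum>l\<in>F. c l * basis_vec l k))"
    using insert by simp
  then have "d (\<lambda>k. \<Sum>l\<in>insert a F. c l * basis_vec l k)
      = (\<lambda>k. d (\<lambda>k. c a * basis_vec a k) k + d (\<lambda>k. \<Sum>l\<in>F. c l * basis_vec l k) k)"
    using add[rule_format, OF e1 e2] by simp
  also have "d (\<lambda>k. c a * basis_vec a k) = (\<lambda>k. c a * d (basis_vec a) k)"
    using sc[rule_format, OF ea] .
  finally show ?case using insert FV by simp
qed

lemma der_expand:
  assumes der: "is_derivation V E d" and fin: "finite V" and u: "u \<in> evo_space V"
  shows "d u = (\<lambda>k. \<Sum>l\<in>V. u l * der_coeff d l k)"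
proof -
  have "u = (\<lambda>k. \<Sum>l\<in>V. u l * basis_vec l k)"
  proof
    fix k
    show "u k = (\<Sum>l\<in>V. u l * basis_vec l k)"
      using u fin by (auto simp: basis_vec_def evo_space_def if_distrib cong: if_cong)
  qed
  then have "d u = d (\<lambda>k. \<Sum>l\<in>V. u l * basis_vec l k)" by simp
  also have "\<dots> = (\<lambda>k. \<Sum>l\<in>V. u l * d (basis_vec l) k)"
    using der_sum[OF der fin] by blast
  finally show ?thesis by (simp add: der_coeff_def)
qed

lemma mult_left:
  assumes "j \<in> V" "finite V"
  shows "evo_mult V E u (basis_vec j) = (\<lambda>k. if k \<in> V then u j * (if E j k then 1 else 0) else 0)"
proof
  fix k
  have "(\<Sum>i\<in>V. u i * basis_vec j i * (if E i k then 1 else 0)) = (\<Sum>i\<in>V. if i = j then u j * (if E j k then 1 else 0) else 0)"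
    by (rule sum.cong) (auto simp: basis_vec_def)
  then show "evo_mult V E u (basis_vec j) k = (if k \<in> V then u j * (if E j k then 1 else 0) else 0)"
    using assms by (simp add: evo_mult_def)
qed

lemma mult_right:
  assumes "j \<in> V" "finite V"
  shows "evo_mult V E (basis_vec j) u = (\<lambda>k. if k \<in> V then u j * (if E j k then 1 else 0) else 0)"
proof
  fix k
  have "(\<Sum>i\<in>V. basis_vec j i * u i * (if E i k then 1 else 0)) = (\<Sum>i\<in>V. if i = j then u j * (if E j k then 1 else 0) else 0)"
    by (rule sum.cong) (auto simp: basis_vec_def)
  then show "evo_mult V E (basis_vec j) u k = (if k \<in> V then u j * (if E j k then 1 else 0) else 0)"
    using assms by (simp add: evo_mult_def)
qed

lemma bv_in: "i \<in> V \<Longrightarrow> basis_vec i \<in> evo_space V"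
  by (auto simp: evo_space_def basis_vec_def)

lemma bv_ne: "i \<noteq> j \<Longrightarrow> basis_vec i j = 0" by (simp add: basis_vec_def)
lemma bv_eq: "basis_vec i i = 1" by (simp add: basis_vec_def)

lemma der_prod:
  assumes der: "is_derivation V E d" and "i \<in> V" "j \<in> V"
  shows "d (evo_mult V E (basis_vec i) (basis_vec j)) = (\<lambda>k. evo_mult V E (d (basis_vec i)) (basis_vec j) k + evo_mult V E (basis_vec i) (d (basis_vec j)) k)"
proof -
  have m: "\<forall>u\<in>evo_space V. \<forall>v\<in>evo_space V.
        d (evo_mult V E u v) = (\<lambda>k. evo_mult V E (d u) v k + evo_mult V E u (d v) k)"
    using der unfolding is_derivation_def by (elim conjE)
  show ?thesis using m[rule_format, OF bv_in[OF assms(2)] bv_in[OF assms(3)]] .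
qed

lemma eqA:
  fixes d :: "('v \<Rightarrow> 'k::field_char_0) \<Rightarrow> ('v \<Rightarrow> 'k)"
  assumes der: "is_derivation V E d" and fin: "finite V" and iV: "i \<in> V" and jV: "j \<in> V"
    and ij: "i \<noteq> j" and kV: "k \<in> V"
  shows "der_coeff d i j * (if E j k then 1 else 0) + der_coeff d j i * (if E i k then 1 else 0) = 0"
proof -
  have "evo_mult V E (basis_vec i) (basis_vec j) = (\<lambda>k. if k \<in> V then basis_vec i j * (if E j k then 1 else 0) else (0::'k))"
    by (rule mult_left[OF jV fin])
  moreover have "basis_vec i j = (0::'k)" using ij by (rule bv_ne)
  ultimately have "evo_mult V E (basis_vec i) (basis_vec j) = (\<lambda>k. 0::'k)"
    by (simp add: fun_eq_iff)
  then have "(\<lambda>k. 0) = (\<lambda>k. evo_mult V E (d (basis_vec i)) (basis_vec j) k + evo_mult V E (basis_vec i) (d (basis_vec j)) k)"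
    using der_prod[OF der iV jV] der_zero[OF der] by simp
  then have "0 = evo_mult V E (d (basis_vec i)) (basis_vec j) k + evo_mult V E (basis_vec i) (d (basis_vec j)) k"
    by (rule fun_cong[where x=k])
  then show ?thesis using kV
    by (simp add: der_coeff_def mult_left[OF jV fin] mult_right[OF iV fin])
qed

lemma eqC:
  fixes d :: "('v \<Rightarrow> 'k::field_char_0) \<Rightarrow> ('v \<Rightarrow> 'k)"
  assumes der: "is_derivation V E d" and fin: "finite V" and iV: "i \<in> V" and mV: "m \<in> V"
  shows "(\<Sum>l\<in>V. (if E i l then 1 else 0) * der_coeff d l m) = 2 * der_coeff d i i * (if E i m then 1 else 0)"
proof -
  have "evo_mult V E (basis_vec i) (basis_vec i) = (\<lambda>k. if k \<in> V then basis_vec i i * (if E i k then 1 else 0) else (0::'k))"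
    by (rule mult_left[OF iV fin])
  moreover have "basis_vec i i = (1::'k)" by (rule bv_eq)
  ultimately have p: "evo_mult V E (basis_vec i) (basis_vec i) = (\<lambda>k. if k \<in> V then (if E i k then 1 else 0) else (0::'k))"
    by (simp add: fun_eq_iff)
  have sp: "(\<lambda>k. if k \<in> V then (if E i k then 1 else 0) else 0::'k) \<in> evo_space V"
    by (simp add: evo_space_def)
  have "d (evo_mult V E (basis_vec i) (basis_vec i)) m = (\<Sum>l\<in>V. (if l \<in> V then (if E i l then 1 else 0) else 0) * der_coeff d l m)"
    unfolding p using der_expand[OF der fin sp] by simp
  also have "\<dots> = (\<Sum>l\<in>V. (if E i l then 1 else 0) * der_coeff d l m)"
    by (rule sum.cong) auto
  finally have 1: "d (evo_mult V E (basis_vec i) (basis_vec i)) m = (\<Sum>l\<in>V. (if E i l then 1 else 0) * der_coeff d l m)" .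
  have "d (evo_mult V E (basis_vec i) (basis_vec i)) m = 2 * der_coeff d i i * (if E i m then 1 else 0)"
    using der_prod[OF der iV iV] mV
    by (simp add: der_coeff_def mult_left[OF iV fin] mult_right[OF iV fin])
  with 1 show ?thesis by simp
qed

context
  fixes V :: "'v set" and E :: "'v \<Rightarrow> 'v \<Rightarrow> bool" and D :: "'v \<Rightarrow> 'v \<Rightarrow> 'k::field_char_0"
  assumes sg: "simple_graph V E"
    and nb: "\<forall>i\<in>V. \<exists>x. E i x"
    and hA: "\<And>i j k. i \<in> V \<Longrightarrow> j \<in> V \<Longrightarrow> i \<noteq> j \<Longrightarrow> k \<in> V \<Longrightarrow>
       D i j * (if E j k then 1 else 0) + D j i * (if E i k then 1 else 0) = 0"
    and hC: "\<And>i m. i \<in> V \<Longrightarrow> m \<in> V \<Longrightarrow>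
       (\<Sum>l\<in>V. (if E i l then 1 else 0) * D l m) = 2 * D i i * (if E i m then 1 else 0)"
begin

lemma Ein: "E i j \<Longrightarrow> i \<in> V \<and> j \<in> V" using sg unfolding simple_graph_def by blast
lemma Esym: "E i j \<Longrightarrow> E j i" using sg unfolding simple_graph_def by blast
lemma finV: "finite V" using sg unfolding simple_graph_def by blast

lemma offzero:
  assumes iV: "i \<in> V" and jV: "j \<in> V" and ij: "i \<noteq> j" and ne: "nbhd E i \<noteq> nbhd E j"
  shows "D i j = 0"
proof -
  obtain x where x: "E i x \<noteq> E j x" using ne by (auto simp: nbhd_def)
  show ?thesis
  proof (cases "E j x")
    case True
    then have "\<not> E i x" using x by simp
    then show ?thesis using hA[OF iV jV ij, of x] True Ein[OF True] by simp
  next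
    case False
    then have ix: "E i x" using x by simp
    then have "D j i = 0" using hA[OF iV jV ij, of x] False Ein[OF ix] by simp
    obtain y where y: "E j y" using nb jV by blast
    show ?thesis using hA[OF iV jV ij, of y] y Ein[OF y] \<open>D j i = 0\<close> by simp
  qed
qed

lemma antisym:
  assumes iV: "i \<in> V" and jV: "j \<in> V" and ij: "i \<noteq> j" and eq: "nbhd E i = nbhd E j"
  shows "D j i = - D i j"
proof -
  obtain y where y: "E j y" using nb jV by blast
  then have "E i y" using eq by (auto simp: nbhd_def)
  then show ?thesis using hA[OF iV jV ij, of y] y Ein[OF y] by (simp add: eq_neg_iff_add_eq_0 add.commute)
qed

definition Cl :: "'v \<Rightarrow> 'v set" where "Cl x = {k\<in>V. nbhd E k = nbhd E x}"

lemma colsum: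
  assumes iV: "i \<in> V" and mV: "m \<in> V" and im: "E i m"
  shows "(\<Sum>l\<in>Cl m. D l m) = 2 * D i i"
proof -
  have "(\<Sum>l\<in>V. (if E i l then 1 else 0) * D l m) = (\<Sum>l\<in>V. if l \<in> Cl m then D l m else 0)"
  proof (rule sum.cong)
    fix l assume lV: "l \<in> V"
    show "(if E i l then 1 else 0) * D l m = (if l \<in> Cl m then D l m else 0)"
    proof (cases "l \<in> Cl m")
      case True
      then have "nbhd E l = nbhd E m" by (simp add: Cl_def)
      moreover have "i \<in> nbhd E m" using Esym[OF im] by (simp add: nbhd_def)
      ultimately have "E l i" by (simp add: nbhd_def) blast
      then show ?thesis using True Esym[OF \<open>E l i\<close>] by simp
    next
      case False
      then have "nbhd E l \<noteq> nbhd E m" "l \<noteq> m" using lV mV by (auto simp: Cl_def)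
      then show ?thesis using offzero[OF lV mV] False by simp
    qed
  qed simp
  also have "\<dots> = sum (\<lambda>l. D l m) (V \<inter> Cl m)"
    by (rule sum.inter_restrict[symmetric]) (rule finV)
  also have "V \<inter> Cl m = Cl m" by (auto simp: Cl_def)
  finally show ?thesis using hC[OF iV mV] im by simp
qed

lemma dbl:
  assumes fin: "finite C" and CV: "C \<subseteq> V" and tw: "\<forall>a\<in>C. \<forall>b\<in>C. nbhd E a = nbhd E b"
  shows "(\<Sum>a\<in>C. \<Sum>b\<in>C. D b a) = (\<Sum>a\<in>C. D a a)"
proof -
  let ?S = "\<Sum>a\<in>C. \<Sum>b\<in>C. D b a"
  have "?S = (\<Sum>a\<in>C. \<Sum>b\<in>C. (if a = b then 2 * D a a else 0) - D a b)"
  proof (rule sum.cong[OF refl], rule sum.cong[OF refl])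
    fix a b assume a: "a \<in> C" and b: "b \<in> C"
    show "D b a = (if a = b then 2 * D a a else 0) - D a b"
    proof (cases "a = b")
      case True then show ?thesis by simp
    next
      case False
      have "a \<in> V" "b \<in> V" "nbhd E a = nbhd E b" using a b CV tw by blast+
      then have "D b a = - D a b" using antisym[of a b] False by blast
      then show ?thesis using False by simp
    qed
  qed
  also have "\<dots> = (\<Sum>a\<in>C. 2 * D a a) - (\<Sum>a\<in>C. \<Sum>b\<in>C. D a b)"
    using fin by (simp add: sum_subtractf)
  also have "(\<Sum>a\<in>C. \<Sum>b\<in>C. D a b) = ?S" by (rule sum.swap)
  finally have "2 * ?S = 2 * (\<Sum>a\<in>C. D a a)" by (simp add: sum_distrib_left)
  then show ?thesis by simp
qed

lemma key:
  assumes iV: "i \<in> V" and mV: "m \<in> V" and im: "E i m"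
  shows "D m m = 2 * D i i"
proof -
  let ?C = "Cl m"
  have CV: "?C \<subseteq> V" by (auto simp: Cl_def)
  have fin: "finite ?C" using finite_subset[OF CV finV] .
  have mC: "m \<in> ?C" using mV by (simp add: Cl_def)
  have tw: "\<forall>a\<in>?C. \<forall>b\<in>?C. nbhd E a = nbhd E b" by (auto simp: Cl_def)
  have h1: "(\<Sum>l\<in>?C. D l m') = 2 * D i i" if m': "m' \<in> ?C" for m'
  proof -
    have eq: "nbhd E m' = nbhd E m" and m'V: "m' \<in> V" using m' by (auto simp: Cl_def)
    have "Cl m' = ?C" using eq by (simp add: Cl_def)
    moreover have "i \<in> nbhd E m" using Esym[OF im] by (simp add: nbhd_def)
    then have "E i m'" using eq Esym by (auto simp: nbhd_def)
    ultimately show ?thesis using colsum[OF iV m'V] by simp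
  qed
  have "(\<Sum>m'\<in>?C. \<Sum>l\<in>?C. D l m') = of_nat (card ?C) * (2 * D i i)"
    using h1 by simp
  moreover have "(\<Sum>m'\<in>?C. \<Sum>l\<in>?C. D l m') = (\<Sum>l\<in>?C. D l l)"
    by (rule dbl[OF fin CV tw])
  moreover have "D l l = D m m" if l: "l \<in> ?C" for l
  proof -
    have lV: "l \<in> V" and eq: "nbhd E l = nbhd E m" using l by (auto simp: Cl_def)
    have "i \<in> nbhd E m" using Esym[OF im] by (simp add: nbhd_def)
    then have "E l i" using eq by (simp add: nbhd_def) blast
    then have "(\<Sum>k\<in>Cl i. D k i) = 2 * D l l" using colsum[OF lV iV] by simp
    moreover have "(\<Sum>k\<in>Cl i. D k i) = 2 * D m m" using colsum[OF mV iV Esym[OF im]] .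
    ultimately show ?thesis by simp
  qed
  then have "(\<Sum>l\<in>?C. D l l) = of_nat (card ?C) * D m m" by simp
  ultimately have "of_nat (card ?C) * D m m = of_nat (card ?C) * (2 * D i i)" by simp
  moreover have "card ?C \<noteq> 0" using fin mC by auto
  ultimately show ?thesis by simp
qed

lemma diagzero:
  assumes iV: "i \<in> V" and im: "E i m"
  shows "D i i = 0"
proof -
  have mV: "m \<in> V" using Ein[OF im] by simp
  have "D m m = 2 * D i i" using key[OF iV mV im] .
  moreover have "D i i = 2 * D m m" using key[OF mV iV Esym[OF im]] .
  ultimately have "3 * D i i = 0" by simp
  then show ?thesis by simp
qed

end

theorem lemma3p6:
  fixes V :: "'v set" and E :: "'v \<Rightarrow> 'v \<Rightarrow> bool" and T :: "'v set"
    and d :: "('v \<Rightarrow> 'k::field_char_0) \<Rightarrow> ('v \<Rightarrow> 'k)"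
  assumes "simple_graph V E" and "connected_graph V E" and "card V \<ge> 3"
    and "twin_class V E T"
    and "is_derivation V E d"
  shows "(\<forall>i\<in>T. \<forall>k\<in>V - T. der_coeff d i k = 0 \<and> der_coeff d k i = 0)
       \<and> (\<forall>i\<in>T. der_coeff d i i = 0)
       \<and> (\<forall>l\<in>nbhd_set E T. der_coeff d l l = 0)
       \<and> (\<forall>i\<in>T. \<forall>j\<in>T. i \<noteq> j \<longrightarrow> der_coeff d i j = - der_coeff d j i)"
proof -
  note sg = assms(1) and der = assms(5)
  have fin: "finite V" using sg unfolding simple_graph_def by blast
  have nb: "\<forall>i\<in>V. \<exists>x. E i x"
  proof
    fix i assume iV: "i \<in> V"
    have "card (V - {i}) \<ge> 2" using assms(3) iV fin by (simp add: card_Diff_singleton)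
    then have "V - {i} \<noteq> {}" by (cases "V - {i} = {}") simp_all
    then obtain j where j: "j \<in> V" "j \<noteq> i" by auto
    have "E\<^sup>*\<^sup>* i j" using assms(2) iV j by (simp add: connected_graph_def)
    then show "\<exists>x. E i x"
    proof (cases rule: converse_rtranclpE)
      case base then show ?thesis using j(2) by simp
    next
      case (step y) then show ?thesis by blast
    qed
  qed
  have hA: "der_coeff d i j * (if E j k then 1 else 0) + der_coeff d j i * (if E i k then 1 else 0) = 0"
    if "i \<in> V" "j \<in> V" "i \<noteq> j" "k \<in> V" for i j k
    using eqA[OF der fin that] .
  have hC: "(\<Sum>l\<in>V. (if E i l then 1 else 0) * der_coeff d l m) = 2 * der_coeff d i i * (if E i m then 1 else 0)"
    if "i \<in> V" "m \<in> V" for i m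
    using eqC[OF der fin that] .
  have oz: "der_coeff d i j = 0" if "i \<in> V" "j \<in> V" "i \<noteq> j" "nbhd E i \<noteq> nbhd E j" for i j
    by (rule offzero[of V E "der_coeff d"]) (assumption | rule sg nb hA hC that)+
  have an: "der_coeff d j i = - der_coeff d i j" if "i \<in> V" "j \<in> V" "i \<noteq> j" "nbhd E i = nbhd E j" for i j
    by (rule antisym[of V E "der_coeff d"]) (assumption | rule sg nb hA hC that)+
  have dz: "der_coeff d i i = 0" if "i \<in> V" "E i m" for i m
    by (rule diagzero[of V E "der_coeff d"]) (assumption | rule sg nb hA hC that)+
  obtain i0 where T: "T = {j\<in>V. nbhd E j = nbhd E i0}" using assms(4) unfolding twin_class_def by blast
  have Ein: "a \<in> V \<and> b \<in> V" if "E a b" for a b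
    using sg that unfolding simple_graph_def by (elim conjE) blast
  have Esym: "E b a" if "E a b" for a b
    using sg that unfolding simple_graph_def by (elim conjE) blast
  have p1: "\<forall>i\<in>T. \<forall>k\<in>V - T. der_coeff d i k = 0 \<and> der_coeff d k i = 0"
  proof (intro ballI)
    fix i k assume i: "i \<in> T" and k: "k \<in> V - T"
    have iV: "i \<in> V" and kV: "k \<in> V" using i k T by simp_all
    have "nbhd E i = nbhd E i0" "nbhd E k \<noteq> nbhd E i0" using i k T by simp_all
    then have ne: "nbhd E i \<noteq> nbhd E k" by simp
    then have ik: "i \<noteq> k" by auto
    show "der_coeff d i k = 0 \<and> der_coeff d k i = 0"
      using oz[OF iV kV ik ne] oz[OF kV iV ik[symmetric] ne[symmetric]] by simp
  qed
  have p2: "\<forall>i\<in>T. der_coeff d i i = 0"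
  proof
    fix i assume i: "i \<in> T"
    then have iV: "i \<in> V" using T by simp
    then obtain x where "E i x" using nb by blast
    then show "der_coeff d i i = 0" using dz[OF iV] by blast
  qed
  have p3: "\<forall>l\<in>nbhd_set E T. der_coeff d l l = 0"
  proof
    fix l assume "l \<in> nbhd_set E T"
    then obtain i where il: "E i l" by (auto simp: nbhd_set_def nbhd_def)
    have "E l i" "l \<in> V" using Esym[OF il] Ein[OF il] by simp_all
    then show "der_coeff d l l = 0" using dz by blast
  qed
  have p4: "\<forall>i\<in>T. \<forall>j\<in>T. i \<noteq> j \<longrightarrow> der_coeff d i j = - der_coeff d j i"
  proof (intro ballI impI)
    fix i j assume i: "i \<in> T" and j: "j \<in> T" and ij: "i \<noteq> j"
    have iV: "i \<in> V" and jV: "j \<in> V" and eq: "nbhd E i = nbhd E j" using i j T by simp_all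
    show "der_coeff d i j = - der_coeff d j i" using an[OF iV jV ij eq] by simp
  qed
  show ?thesis using p1 p2 p3 p4 by blast
qed

end
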